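(* For every integer $n\geq 2$, $$\sum_{k=1}^{n-1}\frac{B_{2k}B_{2n-2k}}{(2k)(2n-2k)}=\sum_{k=1}^{n-1}\frac{B_{2k}B_{2n-2k}}{(2k)(2n-2k)}\binom{2n}{2k}+\frac{B_{2n}}{n}H_{2n}.$$
   Context: $B_n$ denotes the Bernoulli numbers, defined by $\frac{x}{e^x-1}=\sum_{n\ge 0}B_n\frac{x^n}{n!}$ (so $B_0=1$, $B_2=1/6$, $B_4=-1/30,\dots$). $H_i=\sum_{j=1}^i \frac1j$ is the $i$-th harmonic number. *)

theory Defs
  imports "HOL-Analysis.Analysis" "HOL-Computational_Algebra.Formal_Power_Series"
begin

definition bernoulli_fps :: "real fps" where
  "bernoulli_fps = fps_X / (fps_exp 1 - 1)"

definition bernoulli :: "nat \<Rightarrow> real" where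
  "bernoulli n = fact n * fps_nth bernoulli_fps n"

end

theory Submission
  imports Defs
begin

definition c :: "nat \<Rightarrow> real" where "c k = bernoulli k / fact k"

lemma bfps_nth: "fps_nth bernoulli_fps k = c k"
  by (simp add: c_def bernoulli_def)

lemma E1_ne: "(fps_exp (x::real) - 1) \<noteq> 0" if "x \<noteq> 0"
proof
  assume "fps_exp x - 1 = 0"
  hence "fps_nth (fps_exp x - 1) 1 = 0" by simp
  thus False using that by simp
qed

lemma bfps_mult: "bernoulli_fps * (fps_exp 1 - 1) = fps_X"
proof -
  have "subdegree (fps_exp (1::real) - 1) \<le> 1"
    by (rule subdegree_leI) simp
  thus ?thesis unfolding bernoulli_fps_def
    by (intro fps_times_divide_eq E1_ne) auto
qed

lemma brec: "(\<Sum>i=0..n. c i * (if n - i = 0 then 0 else 1 / fact (n-i))) = (if n = 1 then 1 else 0)"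
proof -
  have "fps_nth (bernoulli_fps * (fps_exp 1 - 1)) n = fps_nth fps_X n" by (simp add: bfps_mult)
  hence "(\<Sum>i=0..n. c i * (1 / fact (n - i) - (if n = i then 1 else 0))) = (if n = 1 then 1 else 0)"
    unfolding fps_mult_nth bfps_nth by (simp add: fps_X_def)
  moreover have "(\<Sum>i=0..n. c i * (1 / fact (n - i) - (if n = i then 1 else 0)))
     = (\<Sum>i=0..n. c i * (if n - i = 0 then 0 else 1 / fact (n-i)))"
    by (rule sum.cong) auto
  ultimately show ?thesis by simp
qed

definition bx :: "real \<Rightarrow> real fps" where "bx x = Abs_fps (\<lambda>k. c k * x^k)"

lemma bx_mult: "bx x * (fps_exp x - 1) = fps_const x * fps_X"
proof (rule fps_ext)
  fix n
  have "fps_nth (bx x * (fps_exp x - 1)) n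
      = (\<Sum>i=0..n. x^n * (c i * (if n - i = 0 then 0 else 1 / fact (n-i))))"
    unfolding fps_mult_nth
  proof (rule sum.cong)
    fix i assume "i \<in> {0..n}"
    hence "x^i * x^(n-i) = x^n" by (simp add: power_add[symmetric])
    thus "fps_nth (bx x) i * fps_nth (fps_exp x - 1) (n - i) =
         x ^ n * (c i * (if n - i = 0 then 0 else 1 / fact (n - i)))"
      unfolding bx_def by (auto simp: field_simps)
  qed simp
  also have "\<dots> = x^n * (if n = 1 then 1 else 0)"
    unfolding sum_distrib_left[symmetric] brec by simp
  also have "\<dots> = fps_nth (fps_const x * fps_X) n" by (simp add: fps_X_def)
  finally show "fps_nth (bx x * (fps_exp x - 1)) n = fps_nth (fps_const x * fps_X) n" .
qed

lemma bx_nth: "fps_nth (bx x) k = c k * x^k" by (simp add: bx_def)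

lemma ring_aux: "(b::'a::comm_ring_1)*(a*X)*X*(Q-1) + a*(b*X)*X*(P-1) + a*b*X*X*(P-1)*(Q-1) = a*X*(b*X)*(P*Q-1)"
  by (simp add: algebra_simps)

lemma main_fps:
  fixes x y :: real
  assumes "x \<noteq> 0" "y \<noteq> 0" "x + y = 1"
  shows "bx x * bx y = fps_const y * bx x * bx 1 + fps_const x * bx y * bx 1
          + fps_const (x*y) * fps_X * bx 1"
proof -
  define D where "D = (fps_exp x - 1) * (fps_exp y - 1) * (fps_exp 1 - 1)"
  have D: "D \<noteq> 0" unfolding D_def using assms E1_ne by auto
  have E: "fps_exp x * fps_exp y = fps_exp 1" using assms fps_exp_add_mult[of x y] by simp
  have h1: "bx x * (fps_exp x - 1) = fps_const x * fps_X" by (rule bx_mult)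
  have h2: "bx y * (fps_exp y - 1) = fps_const y * fps_X" by (rule bx_mult)
  have h3: "bx 1 * (fps_exp 1 - 1) = fps_X" using bx_mult[of 1] by simp
  have L: "bx x * bx y * D = (fps_const x * fps_X) * (fps_const y * fps_X) * (fps_exp 1 - 1)"
    unfolding D_def h1[symmetric] h2[symmetric] by (simp only: mult_ac)
  have R: "(fps_const y * bx x * bx 1 + fps_const x * bx y * bx 1
          + fps_const (x*y) * fps_X * bx 1) * D
     = fps_const y * (bx x * (fps_exp x - 1)) * (bx 1 * (fps_exp 1 - 1)) * (fps_exp y - 1)
       + fps_const x * (bx y * (fps_exp y - 1)) * (bx 1 * (fps_exp 1 - 1)) * (fps_exp x - 1)
       + fps_const (x*y) * fps_X * (bx 1 * (fps_exp 1 - 1)) * (fps_exp x - 1) * (fps_exp y - 1)"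
    unfolding D_def distrib_right by (simp only: mult_ac)
  also have "\<dots> = (fps_const x * fps_X) * (fps_const y * fps_X) * (fps_exp x * fps_exp y - 1)"
    unfolding h1 h2 h3
  proof -
    have "fps_const (x*y) = fps_const x * fps_const y" by simp
    then show "fps_const y * (fps_const x * fps_X) * fps_X * (fps_exp y - 1) +
    fps_const x * (fps_const y * fps_X) * fps_X * (fps_exp x - 1) +
    fps_const (x * y) * fps_X * fps_X * (fps_exp x - 1) * (fps_exp y - 1) =
    fps_const x * fps_X * (fps_const y * fps_X) * (fps_exp x * fps_exp y - 1)"
      by (simp only: ring_aux)
  qed
  finally have R': "(fps_const y * bx x * bx 1 + fps_const x * bx y * bx 1
          + fps_const (x*y) * fps_X * bx 1) * D = bx x * bx y * D"
    unfolding L E .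
  show ?thesis using R' D by simp
qed

lemma coeff_id:
  fixes x y :: real
  assumes "x \<noteq> 0" "y \<noteq> 0" "x + y = 1" "n \<ge> 1"
  shows "(\<Sum>i=0..n. c i * c (n-i) * x^i * y^(n-i)) =
     y * (\<Sum>i=0..n. c i * c (n-i) * x^i) + x * (\<Sum>i=0..n. c i * c (n-i) * y^i) + x*y*c(n-1)"
proof -
  have "fps_nth (bx x * bx y) n = fps_nth (fps_const y * (bx x * bx 1) + fps_const x * (bx y * bx 1)
          + fps_const (x*y) * (fps_X * bx 1)) n"
    using main_fps[OF assms(1-3)] by (simp only: mult.assoc)
  moreover have "\<And>u v. fps_nth (bx u * bx v) n = (\<Sum>i=0..n. c i * c (n-i) * u^i * v^(n-i))"
    by (simp add: fps_mult_nth bx_nth mult_ac)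
  ultimately show ?thesis using assms(4)
    by (simp only: fps_add_nth fps_mult_left_const_nth fps_X_mult_nth) (simp add: sum_distrib_left mult_ac bx_nth)
qed

lemma c0: "c 0 = 1"
  using brec[of 1] by simp

lemma sum_split_ends:
  assumes "n \<ge> (1::nat)"
  shows "(\<Sum>i=0..n. f i) = f 0 + f n + (\<Sum>i=1..n-1. f i)"
proof -
  have "{0..n} = insert 0 (insert n {1..n-1})" using assms by auto
  thus ?thesis using assms by (simp add: add.assoc)
qed

lemma ring_aux2:
  fixes x y :: real
  assumes "y = 1 - x" "SL + cn*Y + cn*X = y*(S1 + cn + cn*X) + x*(S2 + cn + cn*Y) + x*y*d"
  shows "y*S1 + x*S2 + x*y*d + cn*(1 - x*X - y*Y) = SL"
  using assms(2) unfolding assms(1) by (simp add: algebra_simps)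

lemma div_id:
  fixes x y :: real
  assumes "0 < x" "x < 1" "y = 1 - x" "n \<ge> 2"
  shows "(\<Sum>i=1..n-1. c i * c (n-i) * (x^(i-1) * y^(n-i-1)))
       = (\<Sum>i=1..n-1. c i * c (n-i) * (x^(i-1) + y^(i-1))) + c (n-1)
         + c n * (\<Sum>k=1..n. of_nat (Suc n choose k) * (x^(k-1) * y^(n-k)))"
proof -
  have x0: "x \<noteq> 0" and y0: "y \<noteq> 0" and xy: "x + y = 1" using assms by auto
  define SL where "SL = (\<Sum>i=1..n-1. c i * c (n-i) * x^i * y^(n-i))"
  define S1 where "S1 = (\<Sum>i=1..n-1. c i * c (n-i) * x^i)"
  define S2 where "S2 = (\<Sum>i=1..n-1. c i * c (n-i) * y^i)"
  have n1: "n \<ge> 1" using assms by simp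
  have ci: "(\<Sum>i=0..n. c i * c (n-i) * x^i * y^(n-i)) = SL + c n * y^n + c n * x^n"
    unfolding SL_def sum_split_ends[OF n1] by (simp add: c0)
  have c1: "(\<Sum>i=0..n. c i * c (n-i) * x^i) = S1 + c n + c n * x^n"
    unfolding S1_def sum_split_ends[OF n1] by (simp add: c0)
  have c2: "(\<Sum>i=0..n. c i * c (n-i) * y^i) = S2 + c n + c n * y^n"
    unfolding S2_def sum_split_ends[OF n1] by (simp add: c0)
  have key: "SL + c n * y^n + c n * x^n = y * (S1 + c n + c n * x^n) + x * (S2 + c n + c n * y^n) + x*y*c(n-1)"
    using coeff_id[OF x0 y0 xy n1] unfolding ci c1 c2 .
  have a: "x * y * (\<Sum>i=1..n-1. c i * c (n-i) * (x^(i-1) * y^(n-i-1))) = SL"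
    unfolding SL_def sum_distrib_left
  proof (rule sum.cong)
    fix i assume i: "i \<in> {1..n-1}"
    have "x * x^(i-1) = x^i" using i by (cases i) auto
    moreover have "y * y^(n-i-1) = y^(n-i)" using i by (cases "n-i") auto
    ultimately show "x * y * (c i * c (n - i) * (x ^ (i - 1) * y ^ (n - i - 1))) = c i * c (n - i) * x ^ i * y ^ (n - i)"
      by (metis mult.commute mult.left_commute)
  qed simp
  have d: "x * y * (\<Sum>i=1..n-1. c i * c (n-i) * (x^(i-1) + y^(i-1))) = y * S1 + x * S2"
    unfolding S1_def S2_def sum_distrib_left sum.distrib[symmetric]
  proof (rule sum.cong)
    fix i assume i: "i \<in> {1..n-1}"
    obtain j where j: "i = Suc j" using i by (cases i) auto
    show "x * y * (c i * c (n - i) * (x ^ (i - 1) + y ^ (i - 1))) = y * (c i * c (n - i) * x ^ i) + x * (c i * c (n - i) * y ^ i)"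
      unfolding j by (simp add: algebra_simps)
  qed simp
  have e: "x * y * (\<Sum>k=1..n. of_nat (Suc n choose k) * (x^(k-1) * y^(n-k))) = 1 - x^(Suc n) - y^(Suc n)"
  proof -
    have "x * y * (\<Sum>k=1..n. of_nat (Suc n choose k) * (x^(k-1) * y^(n-k)))
        = (\<Sum>k=1..n. of_nat (Suc n choose k) * x^k * y^(Suc n - k))"
      unfolding sum_distrib_left
    proof (rule sum.cong)
      fix k assume k: "k \<in> {1..n}"
      have "x * x^(k-1) = x^k" using k by (cases k) auto
      moreover have "y * y^(n-k) = y^(Suc n - k)" using k by (simp add: Suc_diff_le)
      ultimately show "x * y * (of_nat (Suc n choose k) * (x ^ (k - 1) * y ^ (n - k))) = of_nat (Suc n choose k) * x ^ k * y ^ (Suc n - k)"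
        by (metis mult.commute mult.left_commute)
    qed simp
    also have "\<dots> = (x + y)^(Suc n) - x^(Suc n) - y^(Suc n)"
      unfolding binomial_ring using sum_split_ends[of "Suc n" "\<lambda>k. of_nat (Suc n choose k) * x^k * y^(Suc n - k)"]
      by (simp add: atMost_atLeast0)
    finally show ?thesis using xy by simp
  qed
  have "x * y * (\<Sum>i=1..n-1. c i * c (n-i) * (x^(i-1) * y^(n-i-1)))
      = x * y * ((\<Sum>i=1..n-1. c i * c (n-i) * (x^(i-1) + y^(i-1))) + c (n-1)
         + c n * (\<Sum>k=1..n. of_nat (Suc n choose k) * (x^(k-1) * y^(n-k))))"
  proof -
    have "x * y * ((\<Sum>i=1..n-1. c i * c (n-i) * (x^(i-1) + y^(i-1))) + c (n-1)
         + c n * (\<Sum>k=1..n. of_nat (Suc n choose k) * (x^(k-1) * y^(n-k))))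
       = y * S1 + x * S2 + x * y * c (n-1) + c n * (1 - x^(Suc n) - y^(Suc n))"
    proof -
      define P where "P = (\<Sum>i=1..n-1. c i * c (n-i) * (x^(i-1) + y^(i-1)))"
      define T where "T = (\<Sum>k=1..n. of_nat (Suc n choose k) * (x^(k-1) * y^(n-k)))"
      have "x*y*(P + c(n-1) + c n * T) = x*y*P + x*y*c(n-1) + c n * (x*y*T)" by (simp add: algebra_simps)
      thus ?thesis using d e unfolding P_def[symmetric] T_def[symmetric] by simp
    qed
    also have "\<dots> = SL"
      using ring_aux2[OF assms(3) key] by simp
    finally show ?thesis using a by simp
  qed
  thus ?thesis using x0 y0 by simp
qed

lemma beta_nat: "((\<lambda>t::real. t^a * (1-t)^b) has_integral (fact a * fact b / fact (a+b+1))) {0<..<1}"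
proof -
  have "((\<lambda>t. t powr (real (Suc a) - 1) * (1 - t) powr (real (Suc b) - 1)) has_integral Beta (real (Suc a)) (real (Suc b))) {0..1}"
    by (rule has_integral_Beta_real) auto
  moreover have eq: "\<And>(f::real\<Rightarrow>real) y. (f has_integral y) {0<..<1::real} = (f has_integral y) {0..1}"
    using has_integral_open_interval[of _ _ "0::real" 1] by simp
  ultimately have h: "((\<lambda>t. t powr (real (Suc a) - 1) * (1 - t) powr (real (Suc b) - 1)) has_integral Beta (real (Suc a)) (real (Suc b))) {0<..<1}"
    by blast
  have B: "Beta (real (Suc a)) (real (Suc b)) = fact a * fact b / fact (a+b+1)"
    unfolding Beta_def using Gamma_fact[of a, where 'a=real] Gamma_fact[of b, where 'a=real] Gamma_fact[of "a+b+1", where 'a=real]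
    by (simp add: add_ac)
  show ?thesis
    using h unfolding B
    by (rule has_integral_eq[rotated]) (simp add: powr_realpow)
qed

lemma beta_nat': "a + b + 1 = N \<Longrightarrow> ((\<lambda>t::real. t^a * (1-t)^b) has_integral (fact a * fact b / fact N)) {0<..<1}"
  using beta_nat[of a b] by simp

lemma integrated:
  assumes n: "n \<ge> 2"
  shows "(\<Sum>i=1..n-1. c i * c (n-i) * (fact (i-1) * fact (n-i-1) / fact (n-1)))
       = (\<Sum>i=1..n-1. c i * c (n-i) * (fact (i-1) * fact 0 / fact i + fact 0 * fact (i-1) / fact i)) + c (n-1) * (fact 0 * fact 0 / fact 1)
         + c n * (\<Sum>k=1..n. of_nat (Suc n choose k) * (fact (k-1) * fact (n-k) / fact n))"
proof -
  let ?F = "\<lambda>x::real. (\<Sum>i=1..n-1. c i * c (n-i) * (x^(i-1) * (1-x)^(n-i-1)))"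
  let ?G = "\<lambda>x::real. (\<Sum>i=1..n-1. c i * c (n-i) * (x^(i-1) * (1-x)^0 + x^0 * (1-x)^(i-1))) + c (n-1) * (x^0 * (1-x)^0)
         + c n * (\<Sum>k=1..n. of_nat (Suc n choose k) * (x^(k-1) * (1-x)^(n-k)))"
  have IF: "(?F has_integral (\<Sum>i=1..n-1. c i * c (n-i) * (fact (i-1) * fact (n-i-1) / fact (n-1)))) {0<..<1}"
    by (intro has_integral_sum has_integral_mult_right beta_nat') auto
  have IG: "(?G has_integral ((\<Sum>i=1..n-1. c i * c (n-i) * (fact (i-1) * fact 0 / fact i + fact 0 * fact (i-1) / fact i)) + c (n-1) * (fact 0 * fact 0 / fact 1)
         + c n * (\<Sum>k=1..n. of_nat (Suc n choose k) * (fact (k-1) * fact (n-k) / fact n)))) {0<..<1}"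
    by (intro has_integral_add has_integral_sum has_integral_mult_right beta_nat') auto
  have eq: "?F x = ?G x" if "x \<in> {0<..<1}" for x
  proof -
    have "x > 0" "x < 1" using that by auto
    from div_id[OF this refl n] show ?thesis by simp
  qed
  have "(?F has_integral (\<Sum>i=1..n-1. c i * c (n-i) * (fact (i-1) * fact (n-i-1) / fact (n-1)))) {0<..<1}
     = (?G has_integral (\<Sum>i=1..n-1. c i * c (n-i) * (fact (i-1) * fact (n-i-1) / fact (n-1)))) {0<..<1}"
    by (rule has_integral_cong) (rule eq)
  with IF have IG': "(?G has_integral (\<Sum>i=1..n-1. c i * c (n-i) * (fact (i-1) * fact (n-i-1) / fact (n-1)))) {0<..<1}"
    by simp
  show ?thesis by (rule has_integral_unique[OF IG' IG])
qed


lemma auxA1: "(F::real) \<noteq> 0 \<Longrightarrow> a \<noteq> 0 \<Longrightarrow> b \<noteq> 0 \<Longrightarrow> p \<noteq> 0 \<Longrightarrow> q \<noteq> 0 \<Longrightarrow>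
  F * (Bi / (p*a) * (Bj / (q*b)) * (a*b/F)) = Bi*Bj/(p*q)"
  by (simp add: field_simps)

lemma auxA2: "(a::real) \<noteq> 0 \<Longrightarrow> p \<noteq> 0 \<Longrightarrow> Q \<noteq> 0 \<Longrightarrow>
  F * (Bi / (p*a) * (Bj / Q) * (a*1/(p*a) + 1*a/(p*a))) = 2*(F*Bi*Bj/((p*a)*Q)/p)"
  by (simp add: field_simps)

lemma auxA4: "(p::real) \<noteq> 0 \<Longrightarrow> q \<noteq> 0 \<Longrightarrow> FI \<noteq> 0 \<Longrightarrow> FJ \<noteq> 0 \<Longrightarrow>
  G*Bi*Bj/(FI*FJ)/p + G*Bi*Bj/(FI*FJ)/q = Bi*Bj/(p*q) * ((p+q)*G/(FI*FJ))"
  by (simp add: field_simps)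

lemma auxA5: "(p::real) \<noteq> 0 \<Longrightarrow> q \<noteq> 0 \<Longrightarrow> a \<noteq> 0 \<Longrightarrow> b \<noteq> 0 \<Longrightarrow> N \<noteq> 0 \<Longrightarrow>
  ((p+q)*N/((p*a)*(q*b)))*(a*b/N) = 1/p+1/q"
  by (simp add: field_simps)

lemma auxA7: "(p::real) \<noteq> 0 \<Longrightarrow> G \<noteq> 0 \<Longrightarrow> G*(B/(p*G)) = B/p"
  by (simp add: field_simps)

lemma auxM: "(F::real)*(P + C*(fact 0*fact 0/fact 1) + D*T) = F*P + F*C + (F*D)*T"
  by (simp add: algebra_simps)

lemma auxF: "(a::real) = b + 0 + 2*B/real(2*n)*H \<Longrightarrow> a = b + B/real n * H"
  by simp

lemma auxG: "(a::real) = b + cc + d/e*(2*h) \<Longrightarrow> a = b + cc + 2*d/e*h"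
  by simp

lemma miki:
  assumes n: "n \<ge> 2"
  shows "(\<Sum>i=1..n-1. bernoulli i * bernoulli (n-i) / (real i * real (n-i)))
       = (\<Sum>i=1..n-1. bernoulli i * bernoulli (n-i) / (real i * real (n-i)) * real (n choose i))
         + bernoulli (n-1) + 2 * bernoulli n / real n * harm n"
proof -
  define X where "X i = fact (n-1) * bernoulli i * bernoulli (n-i) / (fact i * fact (n-i))" for i
  have fi: "fact i = real i * fact (i-1)" if "i \<ge> 1" for i
    using fact_reduce[of i] that by simp
  have A1: "fact (n-1) * (c i * c (n-i) * (fact (i-1) * fact (n-i-1) / fact (n-1)))
      = bernoulli i * bernoulli (n-i) / (real i * real (n-i))" if i: "i \<in> {1..n-1}" for i
  proof -
    have e1: "fact (n-i) = real (n-i) * fact (n-i-1)" using fi[of "n-i"] i by auto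
    have e2: "fact i = real i * fact (i-1)" using fi[of i] i by auto
    show ?thesis unfolding c_def e1 e2 using i by (intro auxA1) auto
  qed
  have A2: "fact (n-1) * (c i * c (n-i) * (fact (i-1) * fact 0 / fact i + fact 0 * fact (i-1) / fact i))
      = 2 * (X i / real i)" if i: "i \<in> {1..n-1}" for i
  proof -
    have e2: "fact i = real i * fact (i-1)" using fi[of i] i by auto
    show ?thesis unfolding c_def X_def fact_0 e2 using i by (intro auxA2) auto
  qed
  have Xsym: "X (n-i) = X i" if "i \<in> {1..n-1}" for i
  proof -
    have "n - (n-i) = i" using that by auto
    thus ?thesis unfolding X_def by (simp add: mult_ac)
  qed
  have A3: "(\<Sum>i=1..n-1. X i / real i) = (\<Sum>i=1..n-1. X i / real (n-i))"
  proof -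
    have "(\<Sum>i=1..n-1. X i / real i) = (\<Sum>i=1..n-1. X (n-1+1-i) / real (n-1+1-i))"
      by (rule sum.atLeastAtMost_rev)
    also have "\<dots> = (\<Sum>i=1..n-1. X i / real (n-i))"
      using n by (intro sum.cong) (auto simp: Xsym)
    finally show ?thesis .
  qed
  have A4: "X i / real i + X i / real (n-i) = bernoulli i * bernoulli (n-i) / (real i * real (n-i)) * real (n choose i)"
    if i: "i \<in> {1..n-1}" for i
  proof -
    have fn: "fact n = real n * fact (n-1)" using fi[of n] n by auto
    have bc: "real (n choose i) = fact n / (fact i * fact (n-i))" using i by (intro binomial_fact) auto
    have e: "real n = real i + real (n-i)" using i by (auto simp: of_nat_diff)
    show ?thesis unfolding X_def bc fn e using i by (intro auxA4) auto
  qed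
  have A5: "of_nat (Suc n choose k) * (fact (k-1) * fact (n-k) / fact n) = 1 / real k + 1 / real (Suc n - k)"
    if k: "k \<in> {1..n}" for k
  proof -
    have bc: "real (Suc n choose k) = fact (Suc n) / (fact k * fact (Suc n - k))" using k by (intro binomial_fact) auto
    have f1: "fact (Suc n - k) = real (Suc n - k) * fact (n-k)" using fi[of "Suc n - k"] k by (simp add: Suc_diff_le)
    have f2: "fact k = real k * fact (k-1)" using fi[of k] k by auto
    have f3: "fact (Suc n) = real (Suc n) * fact n" by simp
    have e: "real (Suc n) = real k + real (Suc n - k)" using k by (auto simp: of_nat_diff)
    show ?thesis unfolding bc f1 f2 f3 e using k by (intro auxA5) auto
  qed
  have A6: "(\<Sum>k=1..n. 1 / real k + 1 / real (Suc n - k)) = 2 * harm n"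
  proof -
    have "(\<Sum>k=1..n. 1 / real (Suc n - k)) = (\<Sum>k=1..n. 1 / real (Suc n - (n+1-k)))"
      by (rule sum.atLeastAtMost_rev)
    also have "\<dots> = (\<Sum>k=1..n. 1 / real k)" by (intro sum.cong) auto
    finally show ?thesis by (simp add: sum.distrib harm_def divide_inverse)
  qed
  have A7: "fact (n-1) * c n = bernoulli n / real n"
  proof -
    have fn: "fact n = real n * fact (n-1)" using fi[of n] n by auto
    show ?thesis unfolding c_def fn using n by (intro auxA7) auto
  qed
  have A8: "fact (n-1) * c (n-1) = bernoulli (n-1)" unfolding c_def by simp
  have I: "fact (n-1) * (\<Sum>i=1..n-1. c i * c (n-i) * (fact (i-1) * fact (n-i-1) / fact (n-1)))
       = fact (n-1) * ((\<Sum>i=1..n-1. c i * c (n-i) * (fact (i-1) * fact 0 / fact i + fact 0 * fact (i-1) / fact i)) + c (n-1) * (fact 0 * fact 0 / fact 1)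
         + c n * (\<Sum>k=1..n. of_nat (Suc n choose k) * (fact (k-1) * fact (n-k) / fact n)))"
    by (simp only: integrated[OF n])
  have L: "fact (n-1) * (\<Sum>i=1..n-1. c i * c (n-i) * (fact (i-1) * fact (n-i-1) / fact (n-1)))
      = (\<Sum>i=1..n-1. bernoulli i * bernoulli (n-i) / (real i * real (n-i)))"
    unfolding sum_distrib_left using A1 by (rule sum.cong[OF refl])
  have R1: "fact (n-1) * (\<Sum>i=1..n-1. c i * c (n-i) * (fact (i-1) * fact 0 / fact i + fact 0 * fact (i-1) / fact i))
      = (\<Sum>i=1..n-1. bernoulli i * bernoulli (n-i) / (real i * real (n-i)) * real (n choose i))"
  proof -
    have "fact (n-1) * (\<Sum>i=1..n-1. c i * c (n-i) * (fact (i-1) * fact 0 / fact i + fact 0 * fact (i-1) / fact i))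
        = (\<Sum>i=1..n-1. X i / real i) + (\<Sum>i=1..n-1. X i / real i)"
    proof -
      have "fact (n-1) * (\<Sum>i=1..n-1. c i * c (n-i) * (fact (i-1) * fact 0 / fact i + fact 0 * fact (i-1) / fact i))
          = (\<Sum>i=1..n-1. 2 * (X i / real i))"
        unfolding sum_distrib_left by (rule sum.cong[OF refl]) (rule A2)
      also have "\<dots> = (\<Sum>i=1..n-1. X i / real i + X i / real i)"
        by (rule sum.cong[OF refl]) (rule mult_2)
      finally show ?thesis unfolding sum.distrib .
    qed
    also have "\<dots> = (\<Sum>i=1..n-1. X i / real i + X i / real (n-i))"
      unfolding sum.distrib A3 ..
    also have "\<dots> = (\<Sum>i=1..n-1. bernoulli i * bernoulli (n-i) / (real i * real (n-i)) * real (n choose i))"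
      by (rule sum.cong[OF refl]) (rule A4)
    finally show ?thesis .
  qed
  have R2: "(\<Sum>k=1..n. of_nat (Suc n choose k) * (fact (k-1) * fact (n-k) / fact n)) = 2 * (harm n :: real)"
  proof -
    have "(\<Sum>k=1..n. of_nat (Suc n choose k) * (fact (k-1) * fact (n-k) / fact n))
        = (\<Sum>k=1..n. 1 / real k + 1 / real (Suc n - k))"
      by (rule sum.cong[OF refl]) (rule A5)
    also have "\<dots> = 2 * harm n" by (rule A6)
    finally show ?thesis .
  qed
  show ?thesis
    using trans[OF L[symmetric] I] unfolding auxM R1 R2 A7 A8 by (rule auxG)
qed


lemma ring_aux3: "(b::'a::comm_ring_1) * (E - 1) = X \<Longrightarrow> (b + X) * (1 - E) = - X * E"
proof -
  assume h: "b * (E - 1) = X"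
  have "(b + X) * (1 - E) = - (b * (E - 1)) - X * (E - 1)" by (simp add: algebra_simps)
  also have "\<dots> = - X * E" unfolding h by (simp add: algebra_simps)
  finally show ?thesis .
qed

lemma bx_neg: "bx (-1) = bx 1 + fps_X"
proof -
  define D where "D = (fps_exp (-1::real) - 1) * fps_exp 1"
  have ee: "fps_exp (-1::real) * fps_exp 1 = 1" using fps_exp_add_mult[of "-1::real" 1] by simp
  have D0: "D \<noteq> 0" unfolding D_def using E1_ne[of "-1"] by (simp add: fps_exp_nth)
  have h3: "bx 1 * (fps_exp 1 - 1) = fps_X" using bx_mult[of 1] by simp
  have "bx (-1) * D = - fps_X * fps_exp 1"
    unfolding D_def mult.assoc[symmetric] bx_mult by (simp add: fps_const_neg[symmetric])
  moreover have "(bx 1 + fps_X) * D = - fps_X * fps_exp 1"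
  proof -
    have "D = 1 - fps_exp 1" unfolding D_def using ee by (simp add: algebra_simps)
    thus ?thesis using ring_aux3[OF h3] by simp
  qed
  ultimately show ?thesis using D0 by (metis mult_right_cancel)
qed

lemma bern_odd: assumes "odd k" "k \<ge> 3" shows "bernoulli k = 0"
proof -
  have "fps_nth (bx (-1)) k = fps_nth (bx 1 + fps_X) k" by (simp add: bx_neg)
  hence "- c k = c k" using assms by (simp add: bx_nth fps_X_def)
  hence "c k = 0" by simp
  thus ?thesis unfolding c_def by simp
qed


lemma even_sum:
  fixes n :: nat and h :: "nat \<Rightarrow> real"
  assumes "\<And>i. i \<in> {1..2*n-1} \<Longrightarrow> odd i \<Longrightarrow> h i = 0"
  shows "(\<Sum>i=1..2*n-1. h i) = (\<Sum>k=1..n-1. h (2*k))"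
proof -
  have "(\<Sum>k=1..n-1. h (2*k)) = sum h ((\<lambda>k. 2*k) ` {1..n-1})"
    by (subst sum.reindex) (auto simp: inj_on_def)
  also have "\<dots> = (\<Sum>i=1..2*n-1. h i)"
  proof (rule sum.mono_neutral_left)
    show "(\<lambda>k. 2*k) ` {1..n-1} \<subseteq> {1..2*n-1}" by auto
    show "\<forall>i\<in>{1..2*n-1} - (\<lambda>k. 2*k) ` {1..n-1}. h i = 0"
    proof
      fix i assume i: "i \<in> {1..2*n-1} - (\<lambda>k. 2*k) ` {1..n-1}"
      have "odd i"
      proof
        assume "even i"
        then obtain k where "i = 2*k" by auto
        with i show False by auto
      qed
      thus "h i = 0" using assms i by auto
    qed
  qed auto
  finally show ?thesis by simp
qed

theorem theorem1p2:
  fixes n :: nat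
  assumes "n \<ge> 2"
  shows "(\<Sum>k=1..n-1. bernoulli (2*k) * bernoulli (2*n-2*k) / (real (2*k) * real (2*n-2*k)))
       = (\<Sum>k=1..n-1. bernoulli (2*k) * bernoulli (2*n-2*k) / (real (2*k) * real (2*n-2*k))
              * real ((2*n) choose (2*k)))
         + bernoulli (2*n) / real n * harm (2*n)"
proof -
  have m: "2*n \<ge> 2" using assms by simp
  have vanish: "bernoulli i * bernoulli (2*n-i) = 0" if "i \<in> {1..2*n-1}" "odd i" for i
  proof (cases "i = 1")
    case True
    have "bernoulli (2*n-i) = 0" using True assms by (intro bern_odd) auto
    thus ?thesis by simp
  next
    case False
    hence "bernoulli i = 0" using that by (intro bern_odd) (auto elim: oddE)
    thus ?thesis by simp
  qed
  have s1: "(\<Sum>i=1..2*n-1. bernoulli i * bernoulli (2*n-i) / (real i * real (2*n-i)))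
     = (\<Sum>k=1..n-1. bernoulli (2*k) * bernoulli (2*n-2*k) / (real (2*k) * real (2*n-2*k)))"
    by (rule even_sum) (simp add: vanish)
  have s2: "(\<Sum>i=1..2*n-1. bernoulli i * bernoulli (2*n-i) / (real i * real (2*n-i)) * real ((2*n) choose i))
     = (\<Sum>k=1..n-1. bernoulli (2*k) * bernoulli (2*n-2*k) / (real (2*k) * real (2*n-2*k)) * real ((2*n) choose (2*k)))"
    by (rule even_sum) (simp add: vanish)
  have b: "bernoulli (2*n-1) = 0" using assms by (intro bern_odd) auto
  show ?thesis using miki[OF m] unfolding s1 s2 b by (rule auxF)
qed



end
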